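(* For any integers $q\ge 2$ and positive integers $w\le n$, there exists a $\mathrm{TOC}_q(n,2w,w)$ if and only if $\lfloor n/w\rfloor$ divides $(q-1)^w\binom{n}{w}$.
   Context: $\mathcal{H}_q(n,w)$ is the set of all words of length $n$ over $\mathbb{Z}_q$ with exactly $w$ nonzero entries, with the Hamming distance. An $(n,d,w)_q$-code is a nonempty subset of $\mathcal{H}_q(n,w)$ in which any two distinct words have Hamming distance at least $d$; $A_q(n,d,w)$ is the maximum size of such a code and a code of this size is optimal. A $\mathrm{TOC}_q(n,d,w)$ (tiling) is a partition of $\mathcal{H}_q(n,w)$ into mutually disjoint optimal $(n,d,w)_q$-codes. *)

theory Defs
  imports Main
begin

text \<open>Words of length n over Z_q are lists of length n with entries in {0..<q}
  (entry 0 is the zero of Z_q).\<close>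

definition hamming_wt :: "nat list \<Rightarrow> nat" where
  "hamming_wt x = card {i. i < length x \<and> x ! i \<noteq> 0}"

definition hamming_dist :: "nat list \<Rightarrow> nat list \<Rightarrow> nat" where
  "hamming_dist x y = card {i. i < length x \<and> x ! i \<noteq> y ! i}"

definition H :: "nat \<Rightarrow> nat \<Rightarrow> nat \<Rightarrow> nat list set" where
  "H q n w = {x. length x = n \<and> set x \<subseteq> {..<q} \<and> hamming_wt x = w}"

definition is_code :: "nat \<Rightarrow> nat \<Rightarrow> nat \<Rightarrow> nat \<Rightarrow> nat list set \<Rightarrow> bool" where
  "is_code q n d w C \<longleftrightarrow> C \<noteq> {} \<and> C \<subseteq> H q n w \<and>
     (\<forall>x\<in>C. \<forall>y\<in>C. x \<noteq> y \<longrightarrow> hamming_dist x y \<ge> d)"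

definition A_max :: "nat \<Rightarrow> nat \<Rightarrow> nat \<Rightarrow> nat \<Rightarrow> nat" where
  "A_max q n d w = Max {card C | C. is_code q n d w C}"

definition optimal_code :: "nat \<Rightarrow> nat \<Rightarrow> nat \<Rightarrow> nat \<Rightarrow> nat list set \<Rightarrow> bool" where
  "optimal_code q n d w C \<longleftrightarrow> is_code q n d w C \<and> card C = A_max q n d w"

definition is_TOC :: "nat \<Rightarrow> nat \<Rightarrow> nat \<Rightarrow> nat \<Rightarrow> nat list set set \<Rightarrow> bool" where
  "is_TOC q n d w P \<longleftrightarrow> (\<forall>C\<in>P. optimal_code q n d w C) \<and>
     (\<forall>C1\<in>P. \<forall>C2\<in>P. C1 \<noteq> C2 \<longrightarrow> C1 \<inter> C2 = {}) \<and> \<Union>P = H q n w"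

end

theory Submission
  imports Defs "HOL-Library.FuncSet"
begin

lemma hall:
  assumes "finite I" "\<forall>i\<in>I. finite (A i)" "\<forall>K\<subseteq>I. card K \<le> card (\<Union>(A ` K))"
  shows "\<exists>f. inj_on f I \<and> (\<forall>i\<in>I. f i \<in> A i)"
  using assms
proof (induction "card I" arbitrary: I A rule: less_induct)
  case less
  show ?case
  proof (cases "I = {}")
    case True then show ?thesis by auto
  next
    case False
    show ?thesis
    proof (cases "\<exists>K. K \<subseteq> I \<and> K \<noteq> {} \<and> K \<noteq> I \<and> card (\<Union>(A ` K)) = card K")
      case True
      then obtain K where K: "K \<subseteq> I" "K \<noteq> {}" "K \<noteq> I" "card (\<Union>(A ` K)) = card K" by blast
      have fK: "finite K" using K(1) less.prems(1) finite_subset by blast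
      have "card K < card I" using K less.prems(1) by (meson psubsetI psubset_card_mono)
      moreover have "\<forall>i\<in>K. finite (A i)" using less.prems(2) K(1) by blast
      moreover have "\<forall>K'\<subseteq>K. card K' \<le> card (\<Union>(A ` K'))" using less.prems(3) K(1) by (meson subset_trans)
      ultimately obtain f1 where f1: "inj_on f1 K" "\<forall>i\<in>K. f1 i \<in> A i"
        using less.hyps[of K A] fK by blast
      define X where "X = \<Union>(A ` K)"
      have fX: "finite X" unfolding X_def using fK K(1) less.prems(2) by auto
      define A2 where "A2 = (\<lambda>i. A i - X)"
      have "card K > 0" using fK K(2) by (simp add: card_gt_0_iff)
      then have "card (I - K) < card I" using K(1) fK card_Diff_subset[OF fK K(1)] \<open>card K < card I\<close> by simp
      moreover have "\<forall>K2\<subseteq>I - K. card K2 \<le> card (\<Union>(A2 ` K2))"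
      proof (intro allI impI)
        fix K2 assume K2: "K2 \<subseteq> I - K"
        have fK2: "finite K2" using K2 less.prems(1) finite_subset by blast
        have eq: "\<Union>(A2 ` K2) = \<Union>(A ` (K2 \<union> K)) - X" unfolding A2_def X_def by auto
        have fin: "finite (\<Union>(A ` (K2 \<union> K)))" using K2 K(1) fK2 fK less.prems(2) by auto
        have sub: "X \<subseteq> \<Union>(A ` (K2 \<union> K))" unfolding X_def by auto
        have "K2 \<union> K \<subseteq> I" using K2 K(1) by auto
        then have "card (K2 \<union> K) \<le> card (\<Union>(A ` (K2 \<union> K)))" using less.prems(3) by blast
        moreover have "card (K2 \<union> K) = card K2 + card K" using K2 fK2 fK by (subst card_Un_disjoint) auto
        moreover have "card (\<Union>(A2 ` K2)) = card (\<Union>(A ` (K2 \<union> K))) - card X"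
          using eq card_Diff_subset[OF fX sub] by simp
        ultimately show "card K2 \<le> card (\<Union>(A2 ` K2))" using K(4) X_def by simp
      qed
      moreover have "\<forall>i\<in>I - K. finite (A2 i)" using less.prems(2) unfolding A2_def by blast
      moreover have "finite (I - K)" using less.prems(1) by blast
      ultimately obtain f2 where f2: "inj_on f2 (I - K)" "\<forall>i\<in>I - K. f2 i \<in> A2 i"
        using less.hyps[of "I - K" A2] by blast
      define f where "f = (\<lambda>i. if i \<in> K then f1 i else f2 i)"
      have "inj_on f I"
      proof (rule inj_onI)
        fix a b assume ab: "a \<in> I" "b \<in> I" "f a = f b"
        have X1: "\<forall>i\<in>K. f1 i \<in> X" using f1(2) unfolding X_def by blast
        have X2: "\<forall>i\<in>I - K. f2 i \<notin> X" using f2(2) unfolding A2_def by blast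
        show "a = b"
        proof (cases "a \<in> K"; cases "b \<in> K")
          assume "a \<in> K" "b \<in> K" then show ?thesis using ab f1(1) unfolding f_def inj_on_def by simp
        next
          assume "a \<in> K" "b \<notin> K" then show ?thesis using ab X1 X2 unfolding f_def by force
        next
          assume "a \<notin> K" "b \<in> K" then show ?thesis using ab X1 X2 unfolding f_def by force
        next
          assume "a \<notin> K" "b \<notin> K" then show ?thesis using ab f2(1) unfolding f_def inj_on_def by simp
        qed
      qed
      moreover have "\<forall>i\<in>I. f i \<in> A i" using f1 f2 unfolding f_def A2_def by auto
      ultimately show ?thesis by blast
    next
      case False2: False
      obtain i0 where i0: "i0 \<in> I" using False by blast
      have "card {i0} \<le> card (\<Union>(A ` {i0}))" using less.prems(3) i0 by blast
      then have "A i0 \<noteq> {}" by auto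
      then obtain x where x: "x \<in> A i0" by blast
      define A' where "A' = (\<lambda>i. A i - {x})"
      have "card (I - {i0}) < card I" using i0 less.prems(1) by (rule card_Diff1_less[rotated])
      moreover have "\<forall>K\<subseteq>I - {i0}. card K \<le> card (\<Union>(A' ` K))"
      proof (intro allI impI)
        fix K assume K: "K \<subseteq> I - {i0}"
        show "card K \<le> card (\<Union>(A' ` K))"
        proof (cases "K = {}")
          case True then show ?thesis by simp
        next
          case False
          have fK: "finite K" using K less.prems(1) finite_subset by blast
          have "K \<noteq> I" using K i0 by auto
          then have "card (\<Union>(A ` K)) \<noteq> card K" using False2 False K by auto
          moreover have "card K \<le> card (\<Union>(A ` K))" using less.prems(3) K by auto
          moreover have "\<Union>(A' ` K) = \<Union>(A ` K) - {x}" unfolding A'_def by auto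
          moreover have "finite (\<Union>(A ` K))" using fK K less.prems(2) by auto
          ultimately show ?thesis by (simp add: card_Diff_singleton_if del: UN_iff) linarith
        qed
      qed
      moreover have "\<forall>i\<in>I - {i0}. finite (A' i)" using less.prems(2) unfolding A'_def by blast
      moreover have "finite (I - {i0})" using less.prems(1) by blast
      ultimately obtain f' where f': "inj_on f' (I - {i0})" "\<forall>i\<in>I - {i0}. f' i \<in> A' i"
        using less.hyps[of "I - {i0}" A'] by blast
      define f where "f = f'(i0 := x)"
      have "inj_on f (I - {i0})" using f'(1) unfolding f_def inj_on_def by auto
      moreover have "f i0 \<notin> f ` (I - {i0} - {i0})" using f'(2) unfolding f_def A'_def by auto
      ultimately have "inj_on f (insert i0 (I - {i0}))" by (simp only: inj_on_insert simp_thms)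
      then have "inj_on f I" using i0 by (simp add: insert_absorb)
      moreover have "\<forall>i\<in>I. f i \<in> A i" using f' x i0 unfolding f_def A'_def by auto
      ultimately show ?thesis by blast
    qed
  qed
qed

lemma bmatch:
  fixes c :: "'l \<Rightarrow> nat" and adj :: "'l \<Rightarrow> 'y \<Rightarrow> bool"
  assumes fL: "finite L" and fY: "finite Y"
    and hc: "\<forall>U\<subseteq>L. sum c U \<le> card {y\<in>Y. \<exists>l\<in>U. adj l y}"
    and tot: "sum c L = card Y"
  shows "\<exists>g. (\<forall>y\<in>Y. g y \<in> L \<and> adj (g y) y) \<and> (\<forall>l\<in>L. card {y\<in>Y. g y = l} = c l)"
proof -
  define K where "K = Sigma L (\<lambda>l. {..<c l})"
  define A where "A = (\<lambda>p::'l \<times> nat. {y\<in>Y. adj (fst p) y})"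
  have fK: "finite K" using fL K_def by auto
  have "\<forall>K'\<subseteq>K. card K' \<le> card (\<Union>(A ` K'))"
  proof (intro allI impI)
    fix K' assume K': "K' \<subseteq> K"
    define U where "U = fst ` K'"
    have UL: "U \<subseteq> L" using K' K_def U_def by auto
    have fU: "finite U" using UL fL finite_subset by blast
    have "K' \<subseteq> Sigma U (\<lambda>l. {..<c l})" using K' K_def U_def by force
    then have "card K' \<le> card (Sigma U (\<lambda>l. {..<c l}))" using fU by (intro card_mono) auto
    also have "\<dots> = sum c U" using fU by (subst card_SigmaI) auto
    also have "\<dots> \<le> card {y\<in>Y. \<exists>l\<in>U. adj l y}" using hc UL by blast
    also have "{y\<in>Y. \<exists>l\<in>U. adj l y} = \<Union>(A ` K')" unfolding A_def U_def by auto
    finally show "card K' \<le> card (\<Union>(A ` K'))" .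
  qed
  moreover have "\<forall>p\<in>K. finite (A p)" using fY unfolding A_def by auto
  ultimately obtain f where f: "inj_on f K" "\<forall>p\<in>K. f p \<in> A p" using hall[of K A] fK by blast
  have sub: "f ` K \<subseteq> Y" using f A_def by auto
  have "card (f ` K) = card K" using card_image[OF f(1)] .
  also have "\<dots> = sum c L" unfolding K_def using fL by (subst card_SigmaI) auto
  finally have "card (f ` K) = card Y" using tot by simp
  then have fKY: "f ` K = Y" using card_subset_eq[OF fY sub] by simp
  define g where "g = (\<lambda>y. fst (inv_into K f y))"
  show ?thesis
  proof (intro exI conjI ballI)
    fix y assume y: "y \<in> Y"
    then have p: "inv_into K f y \<in> K" "f (inv_into K f y) = y" using fKY
      by (auto intro: inv_into_into f_inv_into_f)
    then show "g y \<in> L" using K_def g_def by auto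
    show "adj (g y) y" using f(2) p unfolding A_def g_def by force
  next
    fix l assume l: "l \<in> L"
    have "{y\<in>Y. g y = l} = f ` ({l} \<times> {..<c l})"
    proof
      show "{y\<in>Y. g y = l} \<subseteq> f ` ({l} \<times> {..<c l})"
      proof
        fix y assume y: "y \<in> {y\<in>Y. g y = l}"
        then have p: "inv_into K f y \<in> K" "f (inv_into K f y) = y" using fKY
          by (auto intro: inv_into_into f_inv_into_f)
        then have "inv_into K f y \<in> {l} \<times> {..<c l}" using y K_def g_def by (cases "inv_into K f y") auto
        then show "y \<in> f ` ({l} \<times> {..<c l})" using p by (metis image_eqI)
      qed
    next
      show "f ` ({l} \<times> {..<c l}) \<subseteq> {y\<in>Y. g y = l}"
      proof
        fix y assume "y \<in> f ` ({l} \<times> {..<c l})"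
        then obtain p where p: "p \<in> {l} \<times> {..<c l}" "y = f p" by blast
        have pK: "p \<in> K" using p l K_def by auto
        then have "inv_into K f y = p" using p f(1) by (simp add: inv_into_f_f)
        then show "y \<in> {y\<in>Y. g y = l}" using pK p(1) sub p(2) g_def by auto
      qed
    qed
    moreover have "inj_on f ({l} \<times> {..<c l})" using f(1) l K_def by (auto intro: inj_on_subset)
    ultimately show "card {y\<in>Y. g y = l} = c l" by (simp add: card_image card_cartesian_product)
  qed
qed

definition binv :: "nat \<Rightarrow> nat \<Rightarrow> nat \<Rightarrow> nat \<Rightarrow> nat \<Rightarrow> nat \<Rightarrow> (nat \<Rightarrow> nat \<Rightarrow> nat set) \<Rightarrow> bool" where
  "binv n k m t lam j S \<longleftrightarrow>
    (\<forall>i<t. \<forall>s<m. S i s \<subseteq> {..<j}) \<and>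
    (\<forall>i<t. \<forall>s<m. \<forall>s'<m. s \<noteq> s' \<longrightarrow> S i s \<inter> S i s' = {}) \<and>
    (\<forall>T. T \<subseteq> {..<j} \<longrightarrow> card {(i,s). i<t \<and> s<m \<and> S i s = T} =
        (if card T \<le> k then lam * ((n - j) choose (k - card T)) else 0)) \<and>
    (\<forall>i<t. (\<Sum>s<m. k - card (S i s)) \<le> n - j)"

lemma binvD1: "binv n k m t lam j S \<Longrightarrow> \<forall>i<t. \<forall>s<m. S i s \<subseteq> {..<j}"
  unfolding binv_def by (rule conjunct1)
lemma binvD2: "binv n k m t lam j S \<Longrightarrow> \<forall>i<t. \<forall>s<m. \<forall>s'<m. s \<noteq> s' \<longrightarrow> S i s \<inter> S i s' = {}"
  unfolding binv_def by (rule conjunct1[OF conjunct2])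
lemma binvD3: "binv n k m t lam j S \<Longrightarrow> \<forall>T. T \<subseteq> {..<j} \<longrightarrow> card {(i,s). i<t \<and> s<m \<and> S i s = T} =
        (if card T \<le> k then lam * ((n - j) choose (k - card T)) else 0)"
  unfolding binv_def by (rule conjunct1[OF conjunct2[OF conjunct2]])
lemma binvD4: "binv n k m t lam j S \<Longrightarrow> \<forall>i<t. (\<Sum>s<m. k - card (S i s)) \<le> n - j"
  unfolding binv_def by (rule conjunct2[OF conjunct2[OF conjunct2]])

lemma card_pairs:
  "card {(i,s). i<t \<and> s<(m::nat) \<and> P i s} = (\<Sum>i<(t::nat). card {s. s<m \<and> P i s})"
proof -
  have "{(i,s). i<t \<and> s<m \<and> P i s} = Sigma {..<t} (\<lambda>i. {s. s<m \<and> P i s})" by auto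
  then show ?thesis by (simp add: card_SigmaI)
qed

lemma sum_group_slots:
  assumes fR: "finite R" and van: "\<forall>s<(m::nat). S s \<notin> R \<longrightarrow> f (S s) = (0::nat)"
  shows "(\<Sum>T\<in>R. card {s. s<m \<and> S s = T} * f T) = (\<Sum>s<m. f (S s))"
proof -
  have "(\<Sum>T\<in>R. card {s. s<m \<and> S s = T} * f T) = (\<Sum>T\<in>R. \<Sum>s<m. if S s = T then f T else 0)"
  proof (rule sum.cong[OF refl])
    fix T assume "T \<in> R"
    have "(\<Sum>s<m. if S s = T then f T else 0) = (\<Sum>s\<in>{s\<in>{..<m}. S s = T}. f T)"
      by (rule sum.inter_filter[symmetric]) simp
    also have "{s\<in>{..<m}. S s = T} = {s. s<m \<and> S s = T}" by auto
    finally show "card {s. s<m \<and> S s = T} * f T = (\<Sum>s<m. if S s = T then f T else 0)" by simp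
  qed
  also have "\<dots> = (\<Sum>s<m. \<Sum>T\<in>R. if S s = T then f T else 0)" by (rule sum.swap)
  also have "\<dots> = (\<Sum>s<m. f (S s))"
  proof (rule sum.cong[OF refl])
    fix s assume s: "s \<in> {..<m}"
    have "(\<Sum>T\<in>R. if S s = T then f T else 0) = (\<Sum>T\<in>R. if T = S s then f (S s) else 0)"
      by (rule sum.cong) auto
    also have "\<dots> = (if S s \<in> R then f (S s) else 0)" using fR by (simp add: sum.delta)
    also have "\<dots> = f (S s)" using van s by auto
    finally show "(\<Sum>T\<in>R. if S s = T then f T else 0) = f (S s)" .
  qed
  finally show ?thesis .
qed

lemma binv_step:
  assumes inv: "binv n k m t lam j S" and jn: "j < n"
  shows "\<exists>S'. binv n k m t lam (Suc j) S'"
proof -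
  note inv1 = binvD1[OF inv]
  note inv2 = binvD2[OF inv]
  note inv3 = binvD3[OF inv, rule_format]
  note inv4 = binvD4[OF inv]
  define D where "D = n - j"
  have D0: "D > 0" using jn D_def by simp
  have Dn: "n - Suc j = D - 1" using D_def by simp
  define R where "R = {T. T \<subseteq> {..<j} \<and> card T < k}"
  have fR: "finite R" unfolding R_def by (rule finite_subset[of _ "Pow {..<j}"]) auto
  define L where "L = insert None (Some ` R)"
  have fL: "finite L" using fR L_def by simp
  define r where "r = (\<lambda>i. \<Sum>s<m. k - card (S i s))"
  have rD: "\<forall>i<t. r i \<le> D" using inv4 r_def D_def by simp
  define cs where "cs = (\<lambda>T::nat set. lam * ((D - 1) choose (k - card T - 1)))"
  define c where "c = (\<lambda>l::nat set option. case l of None \<Rightarrow> t - (\<Sum>T\<in>R. cs T) | Some T \<Rightarrow> cs T)"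
  define adj where "adj = (\<lambda>l i. case l of None \<Rightarrow> r i < D | Some T \<Rightarrow> (\<exists>s<m. S i s = T))"
  define X where "X = (\<lambda>i l. case l of None \<Rightarrow> D - r i | Some T \<Rightarrow> card {s. s<m \<and> S i s = T} * (k - card T))"
  have rowR: "(\<Sum>T\<in>R. X i (Some T)) = r i" if i: "i < t" for i
  proof -
    have "(\<Sum>T\<in>R. X i (Some T)) = (\<Sum>T\<in>R. card {s. s<m \<and> S i s = T} * (k - card T))"
      unfolding X_def by simp
    also have "\<dots> = (\<Sum>s<m. k - card (S i s))"
    proof (rule sum_group_slots[OF fR])
      show "\<forall>s<m. S i s \<notin> R \<longrightarrow> k - card (S i s) = 0" using inv1 i unfolding R_def by auto
    qed
    finally show ?thesis unfolding r_def .
  qed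
  have row: "sum (X i) L = D" if i: "i < t" for i
  proof -
    have "sum (X i) L = X i None + sum (X i) (Some ` R)" unfolding L_def using fR by (subst sum.insert) auto
    also have "sum (X i) (Some ` R) = (\<Sum>T\<in>R. X i (Some T))" by (subst sum.reindex) (auto simp: inj_on_def)
    finally show ?thesis using rowR[OF i] rD i unfolding X_def by simp
  qed
  have colR: "(\<Sum>i<t. X i (Some T)) = D * cs T" if T: "T \<in> R" for T
  proof -
    have "(\<Sum>i<t. X i (Some T)) = (\<Sum>i<t. card {s. s<m \<and> S i s = T}) * (k - card T)"
      unfolding X_def by (simp add: sum_distrib_right)
    also have "(\<Sum>i<t. card {s. s<m \<and> S i s = T}) = card {(i,s). i<t \<and> s<m \<and> S i s = T}"
      by (rule card_pairs[symmetric])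
    also have "\<dots> = lam * (D choose (k - card T))" using inv3[of T] T unfolding R_def D_def by simp
    finally have "(\<Sum>i<t. X i (Some T)) = lam * ((k - card T) * (D choose (k - card T)))" by simp
    also have "(k - card T) * (D choose (k - card T)) = D * ((D - 1) choose (k - card T - 1))"
      using T unfolding R_def by (intro times_binomial_minus1_eq) auto
    finally show ?thesis unfolding cs_def by simp
  qed
  have colN: "(\<Sum>i<t. X i None) = D * c None"
  proof -
    have "(\<Sum>i<t. X i None) + (\<Sum>i<t. r i) = (\<Sum>i<t. D)"
      unfolding X_def using rD by (simp add: sum.distrib[symmetric])
    then have "(\<Sum>i<t. X i None) = t * D - (\<Sum>i<t. r i)" by simp
    also have "(\<Sum>i<t. r i) = (\<Sum>i<t. \<Sum>T\<in>R. X i (Some T))" using rowR by simp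
    also have "\<dots> = (\<Sum>T\<in>R. \<Sum>i<t. X i (Some T))" by (rule sum.swap)
    also have "\<dots> = (\<Sum>T\<in>R. D * cs T)" using colR by simp
    also have "\<dots> = D * (\<Sum>T\<in>R. cs T)" by (simp add: sum_distrib_left)
    finally show ?thesis unfolding c_def by (simp add: diff_mult_distrib2 mult.commute)
  qed
  have col: "(\<Sum>i<t. X i l) = D * c l" if "l \<in> L" for l
    using that colN colR unfolding L_def c_def by auto
  have pos: "adj l i" if "i < t" "X i l > 0" for i l
  proof (cases l)
    case None then show ?thesis using that unfolding X_def adj_def by simp
  next
    case (Some T)
    then have "{s. s<m \<and> S i s = T} \<noteq> {}" using that unfolding X_def by (auto simp del: Collect_empty_eq)
    then show ?thesis using Some unfolding adj_def by auto
  qed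
  have hc: "\<forall>U\<subseteq>L. sum c U \<le> card {y\<in>{..<t}. \<exists>l\<in>U. adj l y}"
  proof (intro allI impI)
    fix U assume U: "U \<subseteq> L"
    define N where "N = {y\<in>{..<t}. \<exists>l\<in>U. adj l y}"
    have fU: "finite U" using U fL finite_subset by blast
    have "D * sum c U = (\<Sum>l\<in>U. \<Sum>i<t. X i l)" using col U by (simp add: sum_distrib_left subset_iff)
    also have "\<dots> = (\<Sum>i<t. \<Sum>l\<in>U. X i l)" by (rule sum.swap)
    also have "\<dots> \<le> (\<Sum>i<t. if i \<in> N then D else 0)"
    proof (rule sum_mono)
      fix i assume i: "i \<in> {..<t}"
      show "(\<Sum>l\<in>U. X i l) \<le> (if i \<in> N then D else 0)"
      proof (cases "i \<in> N")
        case True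
        have "(\<Sum>l\<in>U. X i l) \<le> sum (X i) L" using U fL by (intro sum_mono2) auto
        then show ?thesis using True row i by simp
      next
        case False
        then have "\<forall>l\<in>U. X i l = 0" using pos i unfolding N_def by auto
        then show ?thesis using False by simp
      qed
    qed
    also have "(\<Sum>i<t. if i \<in> N then D else 0) = (\<Sum>i\<in>{i\<in>{..<t}. i \<in> N}. D)"
      by (rule sum.inter_filter[symmetric]) simp
    also have "{i\<in>{..<t}. i \<in> N} = N" unfolding N_def by auto
    finally have "D * sum c U \<le> D * card N" by simp
    then show "sum c U \<le> card N" using D0 by simp
  qed
  have tot: "sum c L = card {..<t}"
  proof -
    have "sum c (Some ` R) \<le> card {y\<in>{..<t}. \<exists>l\<in>Some ` R. adj l y}" using hc L_def by blast
    also have "\<dots> \<le> card {..<t}" by (rule card_mono) auto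
    finally have le: "sum c (Some ` R) \<le> t" by simp
    have eqs: "sum c (Some ` R) = (\<Sum>T\<in>R. cs T)" unfolding c_def by (subst sum.reindex) (auto simp: inj_on_def)
    have "sum c L = c None + sum c (Some ` R)" unfolding L_def using fR by (subst sum.insert) auto
    then show ?thesis using le eqs unfolding c_def by simp
  qed
  obtain g where g: "\<forall>y\<in>{..<t}. g y \<in> L \<and> adj (g y) y" "\<forall>l\<in>L. card {y\<in>{..<t}. g y = l} = c l"
    using bmatch[OF fL _ hc tot] by blast
  define sel where "sel = (\<lambda>i. SOME s. s<m \<and> Some (S i s) = g i)"
  have selp: "sel i < m \<and> S i (sel i) = T \<and> T \<in> R" if "i < t" "g i = Some T" for i T
  proof -
    have "adj (g i) i" using g(1) that(1) by blast
    then have "\<exists>s. s<m \<and> Some (S i s) = g i" using that(2) unfolding adj_def by auto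
    then have "sel i < m \<and> Some (S i (sel i)) = g i" unfolding sel_def by (rule someI_ex)
    moreover have "g i \<in> L" using g(1) that(1) by blast
    then have "T \<in> R" using that(2) unfolding L_def by auto
    ultimately show ?thesis using that by simp
  qed
  define S' where "S' = (\<lambda>i s. if g i \<noteq> None \<and> s = sel i then insert j (S i s) else S i s)"
  define G where "G = (\<lambda>T::nat set. {i\<in>{..<t}. g i = Some T})"
  have cardG: "card (G T) = (if T \<in> R then cs T else 0)" for T
  proof (cases "T \<in> R")
    case True
    then show ?thesis using g(2) unfolding G_def L_def c_def by auto
  next
    case False
    have "\<forall>i\<in>{..<t}. g i \<noteq> Some T"
    proof
      fix i assume i: "i \<in> {..<t}"
      have "g i \<in> L" using g(1) i by blast
      then show "g i \<noteq> Some T" using False unfolding L_def by auto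
    qed
    then have "G T = {}" unfolding G_def by auto
    then show ?thesis using False by simp
  qed
  have jnot: "j \<notin> S i s" if "i < t" "s < m" for i s using inv1 that by auto
  have a: "\<forall>i<t. \<forall>s<m. S' i s \<subseteq> {..<Suc j}"
  proof (intro allI impI)
    fix i s assume "i < t" "s < m"
    then have "S i s \<subseteq> {..<j}" using inv1 by blast
    then show "S' i s \<subseteq> {..<Suc j}" unfolding S'_def by auto
  qed
  have b: "\<forall>i<t. \<forall>s<m. \<forall>s'<m. s \<noteq> s' \<longrightarrow> S' i s \<inter> S' i s' = {}"
    using inv2 jnot unfolding S'_def by auto
  have d: "\<forall>i<t. (\<Sum>s<m. k - card (S' i s)) \<le> n - Suc j"
  proof (intro allI impI)
    fix i assume i: "i < t"
    show "(\<Sum>s<m. k - card (S' i s)) \<le> n - Suc j"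
    proof (cases "g i")
      case None
      then have "S' i = S i" unfolding S'_def by auto
      moreover have "r i < D" using g(1) i None unfolding adj_def by force
      ultimately show ?thesis using Dn unfolding r_def by simp
    next
      case (Some T)
      note sp = selp[OF i Some]
      have fin: "finite {..<m}" by simp
      have "(\<Sum>s<m. k - card (S' i s)) = (k - card (S' i (sel i))) + (\<Sum>s\<in>{..<m} - {sel i}. k - card (S' i s))"
        using sp by (subst sum.remove[OF fin, of "sel i"]) auto
      also have "(\<Sum>s\<in>{..<m} - {sel i}. k - card (S' i s)) = (\<Sum>s\<in>{..<m} - {sel i}. k - card (S i s))"
        unfolding S'_def by (rule sum.cong) auto
      also have "k - card (S' i (sel i)) = k - card T - 1"
      proof -
        have "finite T" using sp unfolding R_def by (auto intro: finite_subset)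
        moreover have "j \<notin> T" using sp jnot[OF i] by blast
        ultimately show ?thesis using sp Some unfolding S'_def by simp
      qed
      finally have e1: "(\<Sum>s<m. k - card (S' i s)) = k - card T - 1 + (\<Sum>s\<in>{..<m} - {sel i}. k - card (S i s))" .
      have "r i = (k - card (S i (sel i))) + (\<Sum>s\<in>{..<m} - {sel i}. k - card (S i s))"
        unfolding r_def using sp by (subst sum.remove[OF fin, of "sel i"]) auto
      moreover have "card T < k" using sp unfolding R_def by simp
      moreover have "r i \<le> D" using rD i by blast
      ultimately show ?thesis using e1 sp Dn by simp
    qed
  qed
  have c3: "card {(i,s). i<t \<and> s<m \<and> S' i s = T'} =
        (if card T' \<le> k then lam * ((n - Suc j) choose (k - card T')) else 0)" if T': "T' \<subseteq> {..<Suc j}" for T'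
  proof (cases "j \<in> T'")
    case True
    define T where "T = T' - {j}"
    have TT: "T' = insert j T" "j \<notin> T" "T \<subseteq> {..<j}" using True T' unfolding T_def by auto
    have fT: "finite T" using TT(3) finite_subset by blast
    have eq: "{(i,s). i<t \<and> s<m \<and> S' i s = T'} = (\<lambda>i. (i, sel i)) ` G T"
    proof
      show "{(i,s). i<t \<and> s<m \<and> S' i s = T'} \<subseteq> (\<lambda>i. (i, sel i)) ` G T"
      proof
        fix p assume "p \<in> {(i,s). i<t \<and> s<m \<and> S' i s = T'}"
        then obtain i s where p: "p = (i,s)" "i < t" "s < m" "S' i s = T'" by blast
        have mod: "g i \<noteq> None \<and> s = sel i"
        proof (rule ccontr)
          assume "\<not> (g i \<noteq> None \<and> s = sel i)"
          then have "S' i s = S i s" unfolding S'_def by auto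
          then show False using p jnot[OF p(2) p(3)] True by simp
        qed
        then obtain T0 where T0: "g i = Some T0" by auto
        note sp = selp[OF p(2) T0]
        have "insert j (S i s) = insert j T" using p(4) mod TT(1) unfolding S'_def by simp
        then have "S i s = T" using jnot[OF p(2) p(3)] TT(2)
          by (metis insert_ident)
        then have "T0 = T" using sp mod by simp
        then have "i \<in> G T" using T0 p(2) unfolding G_def by simp
        then show "p \<in> (\<lambda>i. (i, sel i)) ` G T" using p(1) mod by auto
      qed
    next
      show "(\<lambda>i. (i, sel i)) ` G T \<subseteq> {(i,s). i<t \<and> s<m \<and> S' i s = T'}"
      proof
        fix p assume "p \<in> (\<lambda>i. (i, sel i)) ` G T"
        then obtain i where i: "p = (i, sel i)" "i < t" "g i = Some T" unfolding G_def by auto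
        note sp = selp[OF i(2) i(3)]
        have "S' i (sel i) = T'" using sp i(3) TT(1) unfolding S'_def by simp
        then show "p \<in> {(i,s). i<t \<and> s<m \<and> S' i s = T'}" using i sp by simp
      qed
    qed
    have "card {(i,s). i<t \<and> s<m \<and> S' i s = T'} = card (G T)"
      unfolding eq by (rule card_image) (auto simp: inj_on_def)
    also have "\<dots> = (if T \<in> R then cs T else 0)" by (rule cardG)
    finally have e: "card {(i,s). i<t \<and> s<m \<and> S' i s = T'} = (if T \<in> R then cs T else 0)" .
    have cT': "card T' = Suc (card T)" using TT fT by simp
    show ?thesis
    proof (cases "card T < k")
      case True
      then have "T \<in> R" using TT(3) unfolding R_def by simp
      then show ?thesis using e True cT' Dn unfolding cs_def by simp
    next
      case False
      then have "T \<notin> R" unfolding R_def by simp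
      then show ?thesis using e False cT' by simp
    qed
  next
    case False
    have T'j: "T' \<subseteq> {..<j}" using False T' by (auto simp: less_Suc_eq)
    define Ob where "Ob = {(i,s). i<t \<and> s<m \<and> S i s = T'}"
    define Im where "Im = (\<lambda>i. (i, sel i)) ` G T'"
    have eq: "{(i,s). i<t \<and> s<m \<and> S' i s = T'} = Ob - Im"
    proof
      show "{(i,s). i<t \<and> s<m \<and> S' i s = T'} \<subseteq> Ob - Im"
      proof
        fix p assume "p \<in> {(i,s). i<t \<and> s<m \<and> S' i s = T'}"
        then obtain i s where p: "p = (i,s)" "i < t" "s < m" "S' i s = T'" by blast
        have nmod: "\<not> (g i \<noteq> None \<and> s = sel i)"
        proof
          assume "g i \<noteq> None \<and> s = sel i"
          then have "j \<in> S' i s" unfolding S'_def by simp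
          then show False using p(4) False by simp
        qed
        then have "S i s = T'" using p(4) unfolding S'_def by auto
        moreover have "p \<notin> Im" using nmod p(1) unfolding Im_def G_def by auto
        ultimately show "p \<in> Ob - Im" using p unfolding Ob_def by simp
      qed
    next
      show "Ob - Im \<subseteq> {(i,s). i<t \<and> s<m \<and> S' i s = T'}"
      proof
        fix p assume "p \<in> Ob - Im"
        then obtain i s where p: "p = (i,s)" "i < t" "s < m" "S i s = T'" "p \<notin> Im" unfolding Ob_def by blast
        have nmod: "\<not> (g i \<noteq> None \<and> s = sel i)"
        proof
          assume mod: "g i \<noteq> None \<and> s = sel i"
          then obtain T0 where T0: "g i = Some T0" by auto
          note sp = selp[OF p(2) T0]
          then have "T0 = T'" using mod p(4) by simp
          then have "i \<in> G T'" using T0 p(2) unfolding G_def by simp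
          then have "p \<in> Im" using p(1) mod unfolding Im_def by auto
          then show False using p(5) by simp
        qed
        then have "S' i s = T'" using p(4) unfolding S'_def by auto
        then show "p \<in> {(i,s). i<t \<and> s<m \<and> S' i s = T'}" using p by simp
      qed
    qed
    have ImOb: "Im \<subseteq> Ob"
    proof
      fix p assume "p \<in> Im"
      then obtain i where i: "p = (i, sel i)" "i < t" "g i = Some T'" unfolding Im_def G_def by auto
      note sp = selp[OF i(2) i(3)]
      then show "p \<in> Ob" using i unfolding Ob_def by simp
    qed
    have fOb: "finite Ob" unfolding Ob_def
      by (rule finite_subset[of _ "{..<t} \<times> {..<m}"]) auto
    have cIm: "card Im = card (G T')" unfolding Im_def by (rule card_image) (auto simp: inj_on_def)
    have "card {(i,s). i<t \<and> s<m \<and> S' i s = T'} = card Ob - card Im"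
      unfolding eq using card_Diff_subset[OF finite_subset[OF ImOb fOb] ImOb] .
    also have "\<dots> = (if card T' \<le> k then lam * (D choose (k - card T')) else 0) - (if T' \<in> R then cs T' else 0)"
      using inv3[OF T'j] cIm cardG unfolding Ob_def D_def by simp
    finally have e: "card {(i,s). i<t \<and> s<m \<and> S' i s = T'} =
       (if card T' \<le> k then lam * (D choose (k - card T')) else 0) - (if T' \<in> R then cs T' else 0)" .
    show ?thesis
    proof (cases "card T' < k")
      case True
      then have R: "T' \<in> R" using T'j unfolding R_def by simp
      obtain a where a: "D = Suc a" using D0 by (cases D) auto
      obtain b where b: "k - card T' = Suc b" using True by (cases "k - card T'") auto
      have "lam * (D choose (k - card T')) - lam * ((D - 1) choose (k - card T' - 1))
          = lam * ((D - 1) choose (k - card T'))"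
        using a b by (simp add: diff_mult_distrib2[symmetric] add_mult_distrib2)
      then show ?thesis using e R True Dn unfolding cs_def by simp
    next
      case False
      then have "T' \<notin> R" unfolding R_def by simp
      then show ?thesis using e False Dn by auto
    qed
  qed
  show ?thesis
    apply (rule exI[of _ S'])
    unfolding binv_def using a b c3 d by blast
qed

lemma binv_init:
  assumes "k * m \<le> n" "t * m = lam * (n choose k)"
  shows "binv n k m t lam 0 (\<lambda>i s. {})"
proof -
  have c: "card {(i,s). i<t \<and> s<m \<and> ({}::nat set) = T} =
        (if card T \<le> k then lam * ((n - 0) choose (k - card T)) else 0)" if "T \<subseteq> {..<(0::nat)}" for T
  proof -
    have T: "T = {}" using that by auto
    have "card {(i,s). i<t \<and> s<m \<and> ({}::nat set) = T} = (\<Sum>i<t. card {s. s<m \<and> ({}::nat set) = T})"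
      by (rule card_pairs)
    also have "\<dots> = t * m" using T by simp
    finally show ?thesis using T assms(2) by simp
  qed
  show ?thesis unfolding binv_def using c assms(1) by (simp add: mult.commute)
qed

lemma binv_final:
  assumes "k * m \<le> n" "t * m = lam * (n choose k)"
  shows "\<exists>S. binv n k m t lam n S"
proof -
  have "\<forall>j. j \<le> n \<longrightarrow> (\<exists>S. binv n k m t lam j S)"
  proof
    fix j show "j \<le> n \<longrightarrow> (\<exists>S. binv n k m t lam j S)"
    proof (induction j)
      case 0 then show ?case using binv_init[OF assms] by blast
    next
      case (Suc j) then show ?case using binv_step by (meson Suc_leD Suc_le_lessD)
    qed
  qed
  then show ?thesis by blast
qed

lemma binv_final_props:
  assumes inv: "binv n k m t lam n S"
  shows "\<forall>i<t. \<forall>s<m. S i s \<subseteq> {..<n} \<and> card (S i s) = k"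
    and "\<forall>i<t. \<forall>s<m. \<forall>s'<m. s \<noteq> s' \<longrightarrow> S i s \<inter> S i s' = {}"
    and "\<forall>T. T \<subseteq> {..<n} \<and> card T = k \<longrightarrow> card {(i,s). i<t \<and> s<m \<and> S i s = T} = lam"
proof -
  note inv1 = binvD1[OF inv]
  note inv3 = binvD3[OF inv, rule_format]
  show "\<forall>i<t. \<forall>s<m. S i s \<subseteq> {..<n} \<and> card (S i s) = k"
  proof (intro allI impI conjI)
    fix i s assume iss: "i < t" "s < m"
    show sub: "S i s \<subseteq> {..<n}" using inv1 iss by blast
    define T where "T = S i s"
    have fin: "finite {(i,s). i<t \<and> s<m \<and> S i s = T}"
      by (rule finite_subset[of _ "{..<t} \<times> {..<m}"]) auto
    have "(i,s) \<in> {(i,s). i<t \<and> s<m \<and> S i s = T}" using iss T_def by simp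
    then have "card {(i,s). i<t \<and> s<m \<and> S i s = T} \<noteq> 0" using fin by auto
    then have "card T \<le> k \<and> (0 choose (k - card T)) \<noteq> 0" using inv3[of T] sub T_def by (simp split: if_splits)
    then show "card (S i s) = k" unfolding T_def by (cases "k - card (S i s)") auto
  qed
  show "\<forall>i<t. \<forall>s<m. \<forall>s'<m. s \<noteq> s' \<longrightarrow> S i s \<inter> S i s' = {}" using binvD2[OF inv] .
  show "\<forall>T. T \<subseteq> {..<n} \<and> card T = k \<longrightarrow> card {(i,s). i<t \<and> s<m \<and> S i s = T} = lam"
    using inv3 by simp
qed

definition wsupp :: "nat list \<Rightarrow> nat set" where
  "wsupp x = {i. i < length x \<and> x ! i \<noteq> 0}"

lemma wt_supp: "hamming_wt x = card (wsupp x)"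
  unfolding hamming_wt_def wsupp_def by simp

lemma finite_wsupp: "finite (wsupp x)"
  unfolding wsupp_def by simp

lemma wsupp_sub: "wsupp x \<subseteq> {..<length x}"
  unfolding wsupp_def by auto

lemma dist_le:
  assumes "length x = length y"
  shows "hamming_dist x y \<le> card (wsupp x \<union> wsupp y)"
  unfolding hamming_dist_def
  by (rule card_mono) (use assms in \<open>auto simp: wsupp_def finite_wsupp\<close>)

lemma dist_disj:
  assumes "length x = length y" "wsupp x \<inter> wsupp y = {}"
  shows "hamming_dist x y = card (wsupp x) + card (wsupp y)"
proof -
  have "{i. i < length x \<and> x ! i \<noteq> y ! i} = wsupp x \<union> wsupp y"
    using assms unfolding wsupp_def by auto
  then show ?thesis unfolding hamming_dist_def using assms(2)
    by (simp add: card_Un_disjoint finite_wsupp)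
qed

lemma H_props:
  assumes "x \<in> H q n w"
  shows "length x = n" "set x \<subseteq> {..<q}" "card (wsupp x) = w" "wsupp x \<subseteq> {..<n}"
  using assms wsupp_sub[of x] unfolding H_def by (auto simp: wt_supp)

lemma far_disj:
  assumes "x \<in> H q n w" "y \<in> H q n w" "hamming_dist x y \<ge> 2 * w"
  shows "wsupp x \<inter> wsupp y = {}"
proof -
  have "hamming_dist x y \<le> card (wsupp x \<union> wsupp y)"
    using dist_le H_props(1)[OF assms(1)] H_props(1)[OF assms(2)] by simp
  moreover have "card (wsupp x \<union> wsupp y) + card (wsupp x \<inter> wsupp y) = w + w"
    using card_Un_Int[OF finite_wsupp finite_wsupp, of x y] H_props(3)[OF assms(1)] H_props(3)[OF assms(2)] by simp
  ultimately have "card (wsupp x \<inter> wsupp y) = 0" using assms(3) by simp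
  then show ?thesis using finite_wsupp by simp
qed

lemma finite_H: "finite (H q n w)"
  by (rule finite_subset[of _ "{xs. set xs \<subseteq> {..<q} \<and> length xs = n}"])
     (auto simp: H_def intro: finite_lists_length_eq)

lemma code_card_le:
  assumes w: "0 < w" and C: "is_code q n (2 * w) w C"
  shows "card C \<le> n div w"
proof -
  have CH: "C \<subseteq> H q n w" using C unfolding is_code_def by blast
  have fC: "finite C" using CH finite_H finite_subset by blast
  have dis: "\<forall>x\<in>C. \<forall>y\<in>C. x \<noteq> y \<longrightarrow> wsupp x \<inter> wsupp y = {}"
  proof (intro ballI impI)
    fix x y assume xy: "x \<in> C" "y \<in> C" "x \<noteq> y"
    then have "hamming_dist x y \<ge> 2 * w" using C unfolding is_code_def by blast
    moreover have "x \<in> H q n w" "y \<in> H q n w" using xy CH by auto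
    ultimately show "wsupp x \<inter> wsupp y = {}" using far_disj[of x q n w y] by blast
  qed
  have "card (\<Union>(wsupp ` C)) = (\<Sum>x\<in>C. card (wsupp x))"
    using fC dis by (intro card_UN_disjoint) (auto simp: finite_wsupp)
  also have "\<dots> = (\<Sum>x\<in>C. w)" using CH H_props(3) by (intro sum.cong) auto
  finally have e: "card (\<Union>(wsupp ` C)) = card C * w" by simp
  have "\<Union>(wsupp ` C) \<subseteq> {..<n}" using CH H_props(4) by blast
  then have "card (\<Union>(wsupp ` C)) \<le> n" by (metis card_lessThan card_mono finite_lessThan)
  then have "card C * w \<le> n" using e by simp
  then show ?thesis using w by (simp add: less_eq_div_iff_mult_less_eq)
qed

lemma explicit_code:
  assumes q: "q \<ge> 2" and w: "0 < w" and wn: "w \<le> n"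
  shows "\<exists>C. is_code q n (2 * w) w C \<and> card C = n div w"
proof -
  define e where "e = (\<lambda>i. map (\<lambda>p. if p div w = i then 1 else (0::nat)) [0..<n])"
  have se0: "wsupp (e i) = {p. p < n \<and> p div w = i}" for i
    unfolding e_def wsupp_def by (auto split: if_splits)
  have se: "wsupp (e i) = {i * w..<Suc i * w}" if i: "i < n div w" for i
  proof -
    have le: "Suc i * w \<le> n" using i w less_eq_div_iff_mult_less_eq[of w "Suc i" n] by simp
    have iff: "p div w = i \<longleftrightarrow> i * w \<le> p \<and> p < Suc i * w" for p
    proof -
      have "p div w = i \<longleftrightarrow> i \<le> p div w \<and> p div w < Suc i" by auto
      also have "\<dots> \<longleftrightarrow> i * w \<le> p \<and> p < Suc i * w"
        using less_eq_div_iff_mult_less_eq[OF w, of i p] div_less_iff_less_mult[OF w, of p "Suc i"] by simp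
      finally show ?thesis .
    qed
    show ?thesis unfolding se0
    proof (rule set_eqI)
      fix p
      show "p \<in> {p. p < n \<and> p div w = i} \<longleftrightarrow> p \<in> {i * w..<Suc i * w}"
        using iff[of p] le by (simp only: mem_Collect_eq atLeastLessThan_iff) linarith
    qed
  qed
  have eH: "e i \<in> H q n w" if i: "i < n div w" for i
  proof -
    have "set (e i) \<subseteq> {..<q}" unfolding e_def using q by auto
    moreover have "hamming_wt (e i) = w" unfolding wt_supp se[OF i] by simp
    ultimately show ?thesis unfolding H_def e_def by simp
  qed
  have dj: "wsupp (e i) \<inter> wsupp (e i') = {}" if "i < n div w" "i' < n div w" "i \<noteq> i'" for i i'
  proof -
    have "i < i' \<or> i' < i" using that by auto
    then show ?thesis
    proof
      assume "i < i'" then have "Suc i * w \<le> i' * w" by (metis Suc_leI mult_le_mono1)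
      then show ?thesis using se that by auto
    next
      assume "i' < i" then have "Suc i' * w \<le> i * w" by (metis Suc_leI mult_le_mono1)
      then show ?thesis using se that by auto
    qed
  qed
  have ne: "wsupp (e i) \<noteq> {}" if "i < n div w" for i using se[OF that] w by simp
  have inj: "inj_on e {..<n div w}"
  proof (rule inj_onI)
    fix i i' assume "i \<in> {..<n div w}" "i' \<in> {..<n div w}" "e i = e i'"
    then show "i = i'" using dj ne by (metis Int_absorb lessThan_iff)
  qed
  define C where "C = e ` {..<n div w}"
  have "n div w > 0" using w wn by (simp add: div_greater_zero_iff)
  then have "C \<noteq> {}" unfolding C_def by auto
  moreover have "C \<subseteq> H q n w" unfolding C_def using eH by auto
  moreover have "\<forall>x\<in>C. \<forall>y\<in>C. x \<noteq> y \<longrightarrow> hamming_dist x y \<ge> 2 * w"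
  proof (intro ballI impI)
    fix x y assume "x \<in> C" "y \<in> C" "x \<noteq> y"
    then obtain i i' where ii: "i < n div w" "i' < n div w" "x = e i" "y = e i'" "i \<noteq> i'"
      unfolding C_def by auto
    have "hamming_dist x y = card (wsupp x) + card (wsupp y)"
      using dist_disj[of x y] H_props(1)[OF eH[OF ii(1)]] H_props(1)[OF eH[OF ii(2)]] dj[OF ii(1) ii(2) ii(5)] ii(3,4) by simp
    then show "hamming_dist x y \<ge> 2 * w" using H_props(3)[OF eH[OF ii(1)]] H_props(3)[OF eH[OF ii(2)]] ii by simp
  qed
  ultimately have "is_code q n (2 * w) w C" unfolding is_code_def by blast
  moreover have "card C = n div w" unfolding C_def using inj by (simp add: card_image)
  ultimately show ?thesis by blast
qed

lemma A_max_eq: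
  assumes q: "q \<ge> 2" and w: "0 < w" and wn: "w \<le> n"
  shows "A_max q n (2 * w) w = n div w"
proof -
  have sub: "{card C | C. is_code q n (2 * w) w C} \<subseteq> {..n div w}" using code_card_le[OF w] by auto
  obtain C0 where C0: "is_code q n (2 * w) w C0" "card C0 = n div w" using explicit_code[OF assms] by blast
  have mem: "n div w \<in> {card C | C. is_code q n (2 * w) w C}" using C0 by force
  show ?thesis unfolding A_max_def
    by (rule Max_eqI) (use sub mem finite_subset in auto)
qed

definition Wd :: "nat \<Rightarrow> nat \<Rightarrow> nat set \<Rightarrow> nat list set" where
  "Wd q n T = {x. length x = n \<and> set x \<subseteq> {..<q} \<and> wsupp x = T}"

lemma card_Wd:
  assumes q: "q \<ge> 2" and T: "T \<subseteq> {..<n}"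
  shows "card (Wd q n T) = (q - 1) ^ card T"
proof -
  have fT: "finite T" using T finite_subset by blast
  define f where "f = (\<lambda>x::nat list. restrict (nth x) T)"
  define f' where "f' = (\<lambda>g. map (\<lambda>p. if p \<in> T then g p else (0::nat)) [0..<n])"
  have "bij_betw f (Wd q n T) (PiE T (\<lambda>_. {1..<q}))"
  proof (rule bij_betw_byWitness[where f'=f'])
    show "\<forall>x\<in>Wd q n T. f' (f x) = x"
    proof
      fix x assume x: "x \<in> Wd q n T"
      have len: "length x = n" and sx: "wsupp x = T" using x unfolding Wd_def by auto
      show "f' (f x) = x"
      proof (rule nth_equalityI)
        show "length (f' (f x)) = length x" using len unfolding f'_def by simp
        fix p assume "p < length (f' (f x))"
        then have p: "p < n" unfolding f'_def by simp
        have "p \<notin> T \<Longrightarrow> x ! p = 0" using sx p len unfolding wsupp_def by auto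
        then show "f' (f x) ! p = x ! p" using p unfolding f'_def f_def by auto
      qed
    qed
    show "\<forall>g\<in>PiE T (\<lambda>_. {1..<q}). f (f' g) = g"
    proof
      fix g assume g: "g \<in> PiE T (\<lambda>_. {1..<q})"
      show "f (f' g) = g"
      proof
        fix p show "f (f' g) p = g p"
        proof (cases "p \<in> T")
          case True
          then have "p < n" using T by auto
          then show ?thesis using True unfolding f_def f'_def by simp
        next
          case False
          then show ?thesis using g unfolding f_def by (simp add: PiE_def extensional_def)
        qed
      qed
    qed
    show "f ` Wd q n T \<subseteq> PiE T (\<lambda>_. {1..<q})"
    proof
      fix y assume "y \<in> f ` Wd q n T"
      then obtain x where x: "x \<in> Wd q n T" "y = f x" by blast
      have len: "length x = n" and sx: "wsupp x = T" and st: "set x \<subseteq> {..<q}" using x unfolding Wd_def by auto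
      have "x ! p \<in> {1..<q}" if "p \<in> T" for p
      proof -
        have "p < length x" "x ! p \<noteq> 0" using that sx unfolding wsupp_def by auto
        moreover then have "x ! p \<in> set x" by simp
        then have "x ! p < q" using st by blast
        ultimately show ?thesis by simp
      qed
      then show "y \<in> PiE T (\<lambda>_. {1..<q})" using x(2) unfolding f_def by auto
    qed
    show "f' ` PiE T (\<lambda>_. {1..<q}) \<subseteq> Wd q n T"
    proof
      fix x assume "x \<in> f' ` PiE T (\<lambda>_. {1..<q})"
      then obtain g where g: "g \<in> PiE T (\<lambda>_. {1..<q})" "x = f' g" by blast
      have gv: "p \<in> T \<Longrightarrow> g p \<in> {1..<q}" for p using g(1) by auto
      have "length x = n" using g(2) unfolding f'_def by simp
      moreover have "set x \<subseteq> {..<q}" using g(2) gv q unfolding f'_def by auto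
      moreover have "wsupp x = T"
      proof -
        have "wsupp x = {p. p < n \<and> (if p \<in> T then g p else 0) \<noteq> 0}"
          using g(2) unfolding f'_def wsupp_def by (auto split: if_splits)
        also have "\<dots> = T"
        proof (rule set_eqI)
          fix p show "p \<in> {p. p < n \<and> (if p \<in> T then g p else 0) \<noteq> 0} \<longleftrightarrow> p \<in> T"
            using T gv[of p] by auto
        qed
        finally show ?thesis .
      qed
      ultimately show "x \<in> Wd q n T" unfolding Wd_def by simp
    qed
  qed
  then have "card (Wd q n T) = card (PiE T (\<lambda>_. {1..<q}))" by (rule bij_betw_same_card)
  also have "\<dots> = (q - 1) ^ card T" using fT by (simp add: card_PiE)
  finally show ?thesis .
qed

lemma H_Union: "H q n w = \<Union>(Wd q n ` {T. T \<subseteq> {..<n} \<and> card T = w})"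
proof
  show "H q n w \<subseteq> \<Union>(Wd q n ` {T. T \<subseteq> {..<n} \<and> card T = w})"
  proof
    fix x assume x: "x \<in> H q n w"
    then have "x \<in> Wd q n (wsupp x)" using H_props[OF x] unfolding Wd_def by simp
    then show "x \<in> \<Union>(Wd q n ` {T. T \<subseteq> {..<n} \<and> card T = w})" using H_props[OF x] by blast
  qed
next
  show "\<Union>(Wd q n ` {T. T \<subseteq> {..<n} \<and> card T = w}) \<subseteq> H q n w"
    unfolding Wd_def H_def by (auto simp: wt_supp)
qed

lemma card_H:
  assumes q: "q \<ge> 2"
  shows "card (H q n w) = (n choose w) * (q - 1) ^ w"
proof -
  let ?I = "{T. T \<subseteq> {..<n} \<and> card T = w}"
  have fI: "finite ?I" by (rule finite_subset[of _ "Pow {..<n}"]) auto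
  have "card (H q n w) = (\<Sum>T\<in>?I. card (Wd q n T))"
    unfolding H_Union
  proof (rule card_UN_disjoint[OF fI])
    show "\<forall>T\<in>?I. finite (Wd q n T)"
      using finite_H[of q n w] H_Union[of q n w] by (metis (no_types, lifting) UN_upper finite_subset)
    show "\<forall>i\<in>?I. \<forall>j\<in>?I. i \<noteq> j \<longrightarrow> Wd q n i \<inter> Wd q n j = {}" unfolding Wd_def by auto
  qed
  also have "\<dots> = (\<Sum>T\<in>?I. (q - 1) ^ w)" using card_Wd[OF q] by (intro sum.cong) auto
  also have "\<dots> = card ?I * (q - 1) ^ w" by simp
  also have "card ?I = n choose w" using n_subsets[of "{..<n}" w] by simp
  finally show ?thesis .
qed

lemma toc_necessary:
  assumes q: "q \<ge> 2" and w: "0 < w" and wn: "w \<le> n" and P: "is_TOC q n (2 * w) w P"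
  shows "(n div w) dvd ((q - 1) ^ w * (n choose w))"
proof -
  have opt: "\<forall>C\<in>P. optimal_code q n (2 * w) w C" and dis: "\<forall>C1\<in>P. \<forall>C2\<in>P. C1 \<noteq> C2 \<longrightarrow> C1 \<inter> C2 = {}"
    and un: "\<Union>P = H q n w" using P unfolding is_TOC_def by blast+
  have cardC: "\<forall>C\<in>P. card C = n div w" using opt A_max_eq[OF q w wn] unfolding optimal_code_def by simp
  have finC: "finite C" if "C \<in> P" for C
  proof -
    have "C \<subseteq> H q n w" using un that by blast
    then show ?thesis using finite_H[of q n w] by (rule finite_subset)
  qed
  have "card (\<Union>P) = sum card P"
    by (rule card_Union_disjoint) (use dis finC in \<open>auto simp: pairwise_def disjnt_def\<close>)
  also have "\<dots> = card P * (n div w)" using cardC by simp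
  finally have "card (H q n w) = card P * (n div w)" using un by simp
  then have "(n div w) dvd card (H q n w)" by simp
  then show ?thesis using card_H[OF q, of n w] by (simp add: mult.commute)
qed

lemma toc_sufficient:
  assumes q: "q \<ge> 2" and w: "0 < w" and wn: "w \<le> n"
    and dv: "(n div w) dvd ((q - 1) ^ w * (n choose w))"
  shows "\<exists>P. is_TOC q n (2 * w) w P"
proof -
  define m where "m = n div w"
  define lam where "lam = (q - 1) ^ w"
  define t where "t = lam * (n choose w) div m"
  have m0: "m > 0" unfolding m_def using w wn by (simp add: div_greater_zero_iff)
  have tm: "t * m = lam * (n choose w)" unfolding t_def lam_def using dv m_def by simp
  have km: "w * m \<le> n" unfolding m_def by (simp add: mult.commute)
  have lam0: "lam > 0" unfolding lam_def using q by simp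
  have "lam * (n choose w) > 0" using lam0 wn by simp
  then have "t * m > 0" using tm by simp
  then have t0: "t > 0" by simp
  obtain S where S: "binv n w m t lam n S" using binv_final[OF km tm] by blast
  note F1 = binv_final_props(1)[OF S] and F2 = binv_final_props(2)[OF S] and F3 = binv_final_props(3)[OF S]
  define Oc where "Oc = (\<lambda>T. {(i,s). i<t \<and> s<m \<and> S i s = T})"
  have bijex: "\<exists>h. bij_betw h (Oc T) (Wd q n T)" if T: "T \<subseteq> {..<n}" "card T = w" for T
  proof (rule finite_same_card_bij)
    show "finite (Oc T)" unfolding Oc_def by (rule finite_subset[of _ "{..<t} \<times> {..<m}"]) auto
    have "Wd q n T \<subseteq> H q n w" using T by (subst H_Union) blast
    then show "finite (Wd q n T)" using finite_H[of q n w] by (rule finite_subset)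
    show "card (Oc T) = card (Wd q n T)" using F3 T card_Wd[OF q T(1)] unfolding Oc_def lam_def by simp
  qed
  define phi where "phi = (\<lambda>T. SOME h. bij_betw h (Oc T) (Wd q n T))"
  have phib: "bij_betw (phi T) (Oc T) (Wd q n T)" if "T \<subseteq> {..<n}" "card T = w" for T
    unfolding phi_def using someI_ex[OF bijex[OF that]] .
  define word where "word = (\<lambda>i s. phi (S i s) (i, s))"
  have wordW: "word i s \<in> Wd q n (S i s)" if "i < t" "s < m" for i s
  proof -
    have "(i,s) \<in> Oc (S i s)" using that unfolding Oc_def by simp
    then show ?thesis unfolding word_def using phib[of "S i s"] F1 that bij_betwE by blast
  qed
  have wordH: "word i s \<in> H q n w" and wordS: "wsupp (word i s) = S i s" if "i < t" "s < m" for i s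
    using wordW[OF that] F1 that unfolding Wd_def H_def by (auto simp: wt_supp)
  have wordinj: "(i, s) = (i', s')" if "i < t" "s < m" "i' < t" "s' < m" "word i s = word i' s'" for i s i' s'
  proof -
    have eqS: "S i s = S i' s'" using wordS[of i s] wordS[of i' s'] that by simp
    define T where "T = S i s"
    have "(i,s) \<in> Oc T" "(i',s') \<in> Oc T" using that eqS unfolding Oc_def T_def by auto
    moreover have "inj_on (phi T) (Oc T)" using phib[of T] F1 that unfolding T_def bij_betw_def by blast
    moreover have "phi T (i,s) = phi T (i',s')" using that(5) eqS unfolding word_def T_def by simp
    ultimately show ?thesis by (meson inj_onD)
  qed
  have wordsurj: "\<exists>i s. i < t \<and> s < m \<and> x = word i s" if x: "x \<in> H q n w" for x
  proof -
    define T where "T = wsupp x"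
    have T: "T \<subseteq> {..<n}" "card T = w" using H_props[OF x] T_def by auto
    have "x \<in> Wd q n T" using H_props[OF x] T_def unfolding Wd_def by simp
    then have "x \<in> phi T ` Oc T" using bij_betw_imp_surj_on[OF phib[OF T]] by simp
    then obtain p where p: "p \<in> Oc T" "x = phi T p" by blast
    then obtain i s where "p = (i,s)" "i < t" "s < m" "S i s = T" unfolding Oc_def by blast
    then show ?thesis using p unfolding word_def by blast
  qed
  define Code where "Code = (\<lambda>i. word i ` {..<m})"
  define P where "P = Code ` {..<t}"
  have codeok: "optimal_code q n (2 * w) w (Code i)" if i: "i < t" for i
  proof -
    have "Code i \<noteq> {}" unfolding Code_def using m0 by auto
    moreover have "Code i \<subseteq> H q n w" unfolding Code_def using wordH i by auto
    moreover have "\<forall>x\<in>Code i. \<forall>y\<in>Code i. x \<noteq> y \<longrightarrow> hamming_dist x y \<ge> 2 * w"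
    proof (intro ballI impI)
      fix x y assume "x \<in> Code i" "y \<in> Code i" "x \<noteq> y"
      then obtain s s' where ss: "s < m" "s' < m" "x = word i s" "y = word i s'" "s \<noteq> s'"
        unfolding Code_def by auto
      have "S i s \<inter> S i s' = {}" using F2 i ss by blast
      then have "wsupp x \<inter> wsupp y = {}" using wordS[OF i ss(1)] wordS[OF i ss(2)] ss by simp
      moreover have "length x = length y" using H_props(1)[OF wordH[OF i ss(1)]] H_props(1)[OF wordH[OF i ss(2)]] ss by simp
      ultimately have "hamming_dist x y = card (wsupp x) + card (wsupp y)" by (rule dist_disj[rotated])
      then show "hamming_dist x y \<ge> 2 * w" using H_props(3)[OF wordH[OF i ss(1)]] H_props(3)[OF wordH[OF i ss(2)]] ss by simp
    qed
    ultimately have "is_code q n (2 * w) w (Code i)" unfolding is_code_def by blast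
    moreover have "card (Code i) = m"
    proof -
      have "inj_on (word i) {..<m}"
      proof (rule inj_onI)
        fix s s' assume "s \<in> {..<m}" "s' \<in> {..<m}" "word i s = word i s'"
        then have "(i,s) = (i,s')" using wordinj[of i s i s'] i by simp
        then show "s = s'" by simp
      qed
      then show ?thesis unfolding Code_def by (simp add: card_image)
    qed
    ultimately show ?thesis unfolding optimal_code_def using A_max_eq[OF q w wn] m_def by simp
  qed
  have "is_TOC q n (2 * w) w P"
    unfolding is_TOC_def
  proof (intro conjI)
    show "\<forall>C\<in>P. optimal_code q n (2 * w) w C" using codeok unfolding P_def by auto
    show "\<forall>C1\<in>P. \<forall>C2\<in>P. C1 \<noteq> C2 \<longrightarrow> C1 \<inter> C2 = {}"
    proof (intro ballI impI)
      fix C1 C2 assume "C1 \<in> P" "C2 \<in> P" "C1 \<noteq> C2"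
      then obtain i i' where ii: "i < t" "i' < t" "C1 = Code i" "C2 = Code i'" "i \<noteq> i'" unfolding P_def by auto
      show "C1 \<inter> C2 = {}"
      proof (rule ccontr)
        assume "C1 \<inter> C2 \<noteq> {}"
        then obtain s s' where ss: "s < m" "s' < m" "word i s = word i' s'" using ii unfolding Code_def by auto
        then have "(i,s) = (i',s')" using wordinj[of i s i' s'] ii by simp
        then show False using ii(5) by simp
      qed
    qed
    show "\<Union>P = H q n w"
    proof
      show "\<Union>P \<subseteq> H q n w" unfolding P_def Code_def using wordH by auto
      show "H q n w \<subseteq> \<Union>P"
      proof
        fix x assume "x \<in> H q n w"
        then obtain i s where "i < t" "s < m" "x = word i s" using wordsurj by blast
        then show "x \<in> \<Union>P" unfolding P_def Code_def by auto
      qed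
    qed
  qed
  then show ?thesis by blast
qed

theorem theorem3p7:
  fixes q n w :: nat
  assumes "q \<ge> 2" and "0 < w" and "w \<le> n"
  shows "(\<exists>P. is_TOC q n (2 * w) w P) \<longleftrightarrow> (n div w) dvd ((q - 1) ^ w * (n choose w))"
proof
  assume "\<exists>P. is_TOC q n (2 * w) w P"
  then obtain P where P: "is_TOC q n (2 * w) w P" by (elim exE)
  show "(n div w) dvd ((q - 1) ^ w * (n choose w))" by (rule toc_necessary[OF assms P])
next
  assume d: "(n div w) dvd ((q - 1) ^ w * (n choose w))"
  show "\<exists>P. is_TOC q n (2 * w) w P" by (rule toc_sufficient[OF assms d])
qed

end
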